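(* Let $a,b,c,d>0$. Then \[ \frac12\,\frac{\left(a^{2}d^{2}-b^{2}c^{2}\right)^{2}}{a^{2}d^{2}+b^{2}c^{2}}+\left(a^{2}-b^{2}\right)\left(c^{2}-d^{2}\right)\le (ac-bd)^{2}. \] *)

theory Defs
  imports Complex_Main
begin

end

theory Submission
  imports Defs
begin

theorem lemma4p4:
  fixes a b c d :: real
  assumes "a > 0" and "b > 0" and "c > 0" and "d > 0"
  shows "(1/2) * ((a^2 * d^2 - b^2 * c^2)^2 / (a^2 * d^2 + b^2 * c^2))
           + (a^2 - b^2) * (c^2 - d^2) \<le> (a * c - b * d)^2"
proof -
  define x where "x = a * d"
  define y where "y = b * c"
  have S: "x^2 + y^2 > 0" using assms unfolding x_def by (simp add: add_pos_nonneg)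
  have e1: "a^2 * d^2 - b^2 * c^2 = x^2 - y^2" "a^2 * d^2 + b^2 * c^2 = x^2 + y^2"
    by (simp_all add: x_def y_def power_mult_distrib)
  have e2: "(a * c - b * d)^2 - (a^2 - b^2) * (c^2 - d^2) = (x - y)^2"
    by (simp add: x_def y_def power2_eq_square algebra_simps)
  have k: "(x^2 - y^2)^2 \<le> 2 * (x - y)^2 * (x^2 + y^2)"
  proof -
    have "(x^2 - y^2)^2 = (x-y)^2 * (x+y)^2" by (simp add: power2_eq_square algebra_simps)
    also have "\<dots> \<le> (x-y)^2 * (2*(x^2+y^2))"
      apply (rule mult_left_mono) using sum_squares_ge_zero[of "x-y" 0]
      by (auto simp: power2_eq_square algebra_simps)
    finally show ?thesis by (simp add: algebra_simps)
  qed
  have "(1/2) * ((x^2 - y^2)^2 / (x^2 + y^2)) \<le> (x - y)^2"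
    using k S by (simp add: divide_simps algebra_simps)
  then show ?thesis unfolding e1 using e2 by linarith
qed

end
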